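(* Let $\mathbb C$ be an essentially algebraic category. Define $\mathcal C$ by $\mathrm{Ob}\,\mathcal C=\mathbb C_0$, $\mathrm{Hom}(a,b)$ the setoid of pairs $(f,r)$ with $f\in\mathbb C_1$ and $r$ a proof of $\mathsf{dom}(f)=a\wedge\mathsf{cod}(f)=b$, where $(f,r)\sim(f',r')$ iff $f=_{\mathbb C_1}f'$; transports $\mathrm{Hom}(p,q)(f,r)=(f,r')$; $\mathrm{id}_a=(\mathsf{id}(a),r)$; and $(g,r)\circ(f,s)=(\mathsf{cmp}(u),r')$ where $u\in\mathbb C_2$ is the unique element with $\mathsf{snd}(u)=g$, $\mathsf{fst}(u)=f$. Then $\mathcal C$ is an HF-category. Conversely, let $\mathcal C$ be an HF-category and define $\mathbb C_0=\mathrm{Ob}\,\mathcal C$; $\mathbb C_1$ the setoid of triples $(a,b,f)$ with $f\in\mathrm{Hom}(a,b)$, where $(a,b,f)\sim(a',b',f')$ iff $\exists p:a=a',\exists q:b=b'$ with $\mathrm{Hom}(p,q)(f)=f'$; $\mathsf{dom}(a,b,f)=a$, $\mathsf{cod}(a,b,f)=b$, $\mathsf{id}(a)=(a,a,\mathrm{id}_a)$; $\mathbb C_2$ the setoid of triples $(\mathbf f,\mathbf g,p)$ with $p:\mathsf{cod}(\mathbf f)=\mathsf{dom}(\mathbf g)$, equality being componentwise equality of $\mathbf f,\mathbf g$; $\mathsf{fst}(\mathbf f,\mathbf g,p)=\mathbf f$, $\mathsf{snd}(\mathbf f,\mathbf g,p)=\mathbf g$; and $\mathsf{cmp}((a,b,f),(c,d,g),p)=(a,d,g\circ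 T(p)\circ f)$ with $T(p)=\mathrm{Hom}(r(b),p)(\mathrm{id}_b)\in\mathrm{Hom}(b,c)$. Then $\mathbb C$ is an essentially algebraic category (satisfies A1–A9).
   Context: Setoids are types with equivalence relations; extensional functions respect them. An essentially algebraic category $\mathbb C$ consists of setoids $\mathbb C_0,\mathbb C_1,\mathbb C_2$ (objects, arrows, composable pairs) and extensional functions $\mathsf{id}:\mathbb C_0\to\mathbb C_1$, $\mathsf{dom},\mathsf{cod}:\mathbb C_1\to\mathbb C_0$, $\mathsf{cmp},\mathsf{fst},\mathsf{snd}:\mathbb C_2\to\mathbb C_1$ satisfying: A1 $\mathsf{dom}(\mathsf{id}(x))=x$; A2 $\mathsf{cod}(\mathsf{id}(x))=x$; A3 $\mathsf{dom}(\mathsf{cmp}(u))=\mathsf{dom}(\mathsf{fst}(u))$; A4 $\mathsf{cod}(\mathsf{cmp}(u))=\mathsf{cod}(\mathsf{snd}(u))$; A5 $\mathsf{fst}(u)=\mathsf{fst}(v)$, $\mathsf{snd}(u)=\mathsf{snd}(v)\Rightarrow u=v$; A6 $\mathsf{dom}(f)=\mathsf{cod}(g)\Rightarrow\exists u\in\mathbb C_2(\mathsf{snd}(u)=f\wedge\mathsf{fst}(u)=g)$; A7 $\mathsf{fst}(u)=\mathsf{id}(y)\Rightarrow\mathsf{cmp}(u)=\mathsf{snd}(u)$; A8 $\mathsf{snd}(u)=\mathsf{id}(x)\Rightarrow\mathsf{cmp}(u)=\mathsf{fst}(u)$; A9 if $\mathsf{fst}(w)=\mathsf{fst}(v)$,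 $\mathsf{snd}(v)=\mathsf{fst}(u)$, $\mathsf{snd}(u)=\mathsf{snd}(z)$, $\mathsf{snd}(w)=\mathsf{cmp}(u)$, $\mathsf{cmp}(v)=\mathsf{fst}(z)$ then $\mathsf{cmp}(w)=\mathsf{cmp}(z)$. A proof-irrelevant family $H$ of setoids over a setoid $X$: setoids $H(x)$ and extensional transports $H(p):H(x)\to H(y)$ for $p:x=_Xy$ with (F1) $H(\mathrm{refl}(x))=_{\rm ext}\mathrm{id}$, (F2) $H(p)=_{\rm ext}H(q)$ for all $p,q:x=_Xy$, (F3) $H(q)\circ H(p)=_{\rm ext}H(q\circ p)$. An HF-category consists of a setoid $\mathrm{Ob}$, a proof-irrelevant family $\mathrm{Hom}$ over $\mathrm{Ob}\times\mathrm{Ob}$ with transports $\mathrm{Hom}(p,q)$, identities $\mathrm{id}_a\in\mathrm{Hom}(a,a)$, and extensional compositions $\circ_{a,b,c}:\mathrm{Hom}(b,c)\times\mathrm{Hom}(a,b)\to\mathrm{Hom}(a,c)$ satisfying identity and associativity laws and the coherence conditions $\mathrm{id}_{a'}=\mathrm{Hom}(p,p)(\mathrm{id}_a)$ for $p:a=a'$ and $\mathrm{Hom}(p,r)(g\circ f)=\mathrm{Hom}(q,r)(g)\circ\mathrm{Hom}(p,q)(f)$ for $p:a=a'$, $q:b=b'$, $r:c=c'$. $r(x)$ denotes the reflexivity proof of $x=x$. *)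

theory Defs
  imports Main
begin

text \<open>Proofs of setoid equalities are propositions,
hence automatically proof-irrelevant in HOL.\<close>

definition setoid :: "'a set \<Rightarrow> ('a \<Rightarrow> 'a \<Rightarrow> bool) \<Rightarrow> bool" where
  "setoid A eq \<longleftrightarrow>
     (\<forall>x\<in>A. eq x x) \<and>
     (\<forall>x\<in>A. \<forall>y\<in>A. eq x y \<longrightarrow> eq y x) \<and>
     (\<forall>x\<in>A. \<forall>y\<in>A. \<forall>z\<in>A. eq x y \<longrightarrow> eq y z \<longrightarrow> eq x z)"

definition ext_fun :: "'a set \<Rightarrow> ('a \<Rightarrow> 'a \<Rightarrow> bool) \<Rightarrow> 'b set \<Rightarrow> ('b \<Rightarrow> 'b \<Rightarrow> bool)
                       \<Rightarrow> ('a \<Rightarrow> 'b) \<Rightarrow> bool" where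
  "ext_fun A eqA B eqB f \<longleftrightarrow>
     (\<forall>x\<in>A. f x \<in> B) \<and> (\<forall>x\<in>A. \<forall>y\<in>A. eqA x y \<longrightarrow> eqB (f x) (f y))"

record ('o, 'm, 'c) eacat =
  C0 :: "'o set"
  eq0 :: "'o \<Rightarrow> 'o \<Rightarrow> bool"
  C1 :: "'m set"
  eq1 :: "'m \<Rightarrow> 'm \<Rightarrow> bool"
  C2 :: "'c set"
  eq2 :: "'c \<Rightarrow> 'c \<Rightarrow> bool"
  ea_id :: "'o \<Rightarrow> 'm"
  ea_dom :: "'m \<Rightarrow> 'o"
  ea_cod :: "'m \<Rightarrow> 'o"
  ea_cmp :: "'c \<Rightarrow> 'm"
  ea_fst :: "'c \<Rightarrow> 'm"
  ea_snd :: "'c \<Rightarrow> 'm"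

definition is_eacat :: "('o, 'm, 'c, 'z) eacat_scheme \<Rightarrow> bool" where
  "is_eacat C \<longleftrightarrow>
     setoid (C0 C) (eq0 C) \<and> setoid (C1 C) (eq1 C) \<and> setoid (C2 C) (eq2 C) \<and>
     ext_fun (C0 C) (eq0 C) (C1 C) (eq1 C) (ea_id C) \<and>
     ext_fun (C1 C) (eq1 C) (C0 C) (eq0 C) (ea_dom C) \<and>
     ext_fun (C1 C) (eq1 C) (C0 C) (eq0 C) (ea_cod C) \<and>
     ext_fun (C2 C) (eq2 C) (C1 C) (eq1 C) (ea_cmp C) \<and>
     ext_fun (C2 C) (eq2 C) (C1 C) (eq1 C) (ea_fst C) \<and>
     ext_fun (C2 C) (eq2 C) (C1 C) (eq1 C) (ea_snd C) \<and>
     \<comment> \<open>A1\<close>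
     (\<forall>x\<in>C0 C. eq0 C (ea_dom C (ea_id C x)) x) \<and>
     \<comment> \<open>A2\<close>
     (\<forall>x\<in>C0 C. eq0 C (ea_cod C (ea_id C x)) x) \<and>
     \<comment> \<open>A3\<close>
     (\<forall>u\<in>C2 C. eq0 C (ea_dom C (ea_cmp C u)) (ea_dom C (ea_fst C u))) \<and>
     \<comment> \<open>A4\<close>
     (\<forall>u\<in>C2 C. eq0 C (ea_cod C (ea_cmp C u)) (ea_cod C (ea_snd C u))) \<and>
     \<comment> \<open>A5\<close>
     (\<forall>u\<in>C2 C. \<forall>v\<in>C2 C. eq1 C (ea_fst C u) (ea_fst C v) \<longrightarrow>
         eq1 C (ea_snd C u) (ea_snd C v) \<longrightarrow> eq2 C u v) \<and>
     \<comment> \<open>A6\<close>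
     (\<forall>f\<in>C1 C. \<forall>g\<in>C1 C. eq0 C (ea_dom C f) (ea_cod C g) \<longrightarrow>
         (\<exists>u\<in>C2 C. eq1 C (ea_snd C u) f \<and> eq1 C (ea_fst C u) g)) \<and>
     \<comment> \<open>A7\<close>
     (\<forall>u\<in>C2 C. \<forall>y\<in>C0 C. eq1 C (ea_fst C u) (ea_id C y) \<longrightarrow>
         eq1 C (ea_cmp C u) (ea_snd C u)) \<and>
     \<comment> \<open>A8\<close>
     (\<forall>u\<in>C2 C. \<forall>x\<in>C0 C. eq1 C (ea_snd C u) (ea_id C x) \<longrightarrow>
         eq1 C (ea_cmp C u) (ea_fst C u)) \<and>
     \<comment> \<open>A9\<close>
     (\<forall>w\<in>C2 C. \<forall>v\<in>C2 C. \<forall>u\<in>C2 C. \<forall>z\<in>C2 C.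
         eq1 C (ea_fst C w) (ea_fst C v) \<longrightarrow>
         eq1 C (ea_snd C v) (ea_fst C u) \<longrightarrow>
         eq1 C (ea_snd C u) (ea_snd C z) \<longrightarrow>
         eq1 C (ea_snd C w) (ea_cmp C u) \<longrightarrow>
         eq1 C (ea_cmp C v) (ea_fst C z) \<longrightarrow>
         eq1 C (ea_cmp C w) (ea_cmp C z))"

text \<open>Since HOL proofs are propositions, the transport along p : a = a', q : b = b' can
only depend on the endpoints; this is exactly condition (F2).\<close>

record ('o, 'h) hfcat =
  Ob :: "'o set"
  obeq :: "'o \<Rightarrow> 'o \<Rightarrow> bool"
  Hom :: "'o \<Rightarrow> 'o \<Rightarrow> 'h set"
  homeq :: "'o \<Rightarrow> 'o \<Rightarrow> 'h \<Rightarrow> 'h \<Rightarrow> bool"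
  tr :: "'o \<Rightarrow> 'o \<Rightarrow> 'o \<Rightarrow> 'o \<Rightarrow> 'h \<Rightarrow> 'h"
  hid :: "'o \<Rightarrow> 'h"
  hcomp :: "'o \<Rightarrow> 'o \<Rightarrow> 'o \<Rightarrow> 'h \<Rightarrow> 'h \<Rightarrow> 'h"  \<comment> \<open>hcomp a b c g f = g o_{a,b,c} f\<close>

definition is_hfcat :: "('o, 'h, 'z) hfcat_scheme \<Rightarrow> bool" where
  "is_hfcat H \<longleftrightarrow>
     setoid (Ob H) (obeq H) \<and>
     (\<forall>a\<in>Ob H. \<forall>b\<in>Ob H. setoid (Hom H a b) (homeq H a b)) \<and>
     \<comment> \<open>transports are extensional functions between the fibres\<close>
     (\<forall>a\<in>Ob H. \<forall>b\<in>Ob H. \<forall>a'\<in>Ob H. \<forall>b'\<in>Ob H. obeq H a a' \<longrightarrow> obeq H b b' \<longrightarrow>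
         ext_fun (Hom H a b) (homeq H a b) (Hom H a' b') (homeq H a' b') (tr H a b a' b')) \<and>
     \<comment> \<open>(F1)\<close>
     (\<forall>a\<in>Ob H. \<forall>b\<in>Ob H. \<forall>f\<in>Hom H a b. homeq H a b (tr H a b a b f) f) \<and>
     \<comment> \<open>(F3)\<close>
     (\<forall>a\<in>Ob H. \<forall>b\<in>Ob H. \<forall>a'\<in>Ob H. \<forall>b'\<in>Ob H. \<forall>a''\<in>Ob H. \<forall>b''\<in>Ob H.
         obeq H a a' \<longrightarrow> obeq H b b' \<longrightarrow> obeq H a' a'' \<longrightarrow> obeq H b' b'' \<longrightarrow>
         (\<forall>f\<in>Hom H a b. homeq H a'' b''
              (tr H a' b' a'' b'' (tr H a b a' b' f)) (tr H a b a'' b'' f))) \<and>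
     \<comment> \<open>identities\<close>
     (\<forall>a\<in>Ob H. hid H a \<in> Hom H a a) \<and>
     \<comment> \<open>compositions are extensional functions Hom(b,c) x Hom(a,b) -> Hom(a,c)\<close>
     (\<forall>a\<in>Ob H. \<forall>b\<in>Ob H. \<forall>c\<in>Ob H. \<forall>g\<in>Hom H b c. \<forall>f\<in>Hom H a b.
         hcomp H a b c g f \<in> Hom H a c) \<and>
     (\<forall>a\<in>Ob H. \<forall>b\<in>Ob H. \<forall>c\<in>Ob H. \<forall>g\<in>Hom H b c. \<forall>g'\<in>Hom H b c.
         \<forall>f\<in>Hom H a b. \<forall>f'\<in>Hom H a b.
         homeq H b c g g' \<longrightarrow> homeq H a b f f' \<longrightarrow>
         homeq H a c (hcomp H a b c g f) (hcomp H a b c g' f')) \<and>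
     \<comment> \<open>identity laws\<close>
     (\<forall>a\<in>Ob H. \<forall>b\<in>Ob H. \<forall>f\<in>Hom H a b.
         homeq H a b (hcomp H a b b (hid H b) f) f \<and>
         homeq H a b (hcomp H a a b f (hid H a)) f) \<and>
     \<comment> \<open>associativity\<close>
     (\<forall>a\<in>Ob H. \<forall>b\<in>Ob H. \<forall>c\<in>Ob H. \<forall>d\<in>Ob H.
         \<forall>h\<in>Hom H c d. \<forall>g\<in>Hom H b c. \<forall>f\<in>Hom H a b.
         homeq H a d (hcomp H a c d h (hcomp H a b c g f))
                     (hcomp H a b d (hcomp H b c d h g) f)) \<and>
     \<comment> \<open>coherence of identities\<close>
     (\<forall>a\<in>Ob H. \<forall>a'\<in>Ob H. obeq H a a' \<longrightarrow>
         homeq H a' a' (hid H a') (tr H a a a' a' (hid H a))) \<and>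
     \<comment> \<open>coherence of composition\<close>
     (\<forall>a\<in>Ob H. \<forall>b\<in>Ob H. \<forall>c\<in>Ob H. \<forall>a'\<in>Ob H. \<forall>b'\<in>Ob H. \<forall>c'\<in>Ob H.
         obeq H a a' \<longrightarrow> obeq H b b' \<longrightarrow> obeq H c c' \<longrightarrow>
         (\<forall>g\<in>Hom H b c. \<forall>f\<in>Hom H a b.
            homeq H a' c' (tr H a c a' c' (hcomp H a b c g f))
                          (hcomp H a' b' c' (tr H b c b' c' g) (tr H a b a' b' f))))"

text \<open>An element (f, r) of
Hom(a,b) is represented by f alone, r being a (proof-irrelevant) proof of
dom f = a and cod f = b; transports are the identity on the underlying arrow; the
composite uses the (up to equality unique) u with snd u = g and fst u = f.\<close>

definition ea_to_hf :: "('o, 'm, 'c, 'z) eacat_scheme \<Rightarrow> ('o, 'm) hfcat" where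
  "ea_to_hf C = \<lparr>
     Ob = C0 C,
     obeq = eq0 C,
     Hom = (\<lambda>a b. {f \<in> C1 C. eq0 C (ea_dom C f) a \<and> eq0 C (ea_cod C f) b}),
     homeq = (\<lambda>a b. eq1 C),
     tr = (\<lambda>a b a' b' f. f),
     hid = ea_id C,
     hcomp = (\<lambda>a b c g f. ea_cmp C (SOME u. u \<in> C2 C \<and> eq1 C (ea_snd C u) g \<and> eq1 C (ea_fst C u) f))
   \<rparr>"

text \<open>Arrows are triples
(a, b, f) with f in Hom(a,b); composable pairs are pairs (F, G) of arrows with
cod F = dom G (the proof p being proof-irrelevant);
cmp((a,b,f),(c,d,g),p) = (a, d, g o (T(p) o f)) with T(p) = Hom(r(b),p)(id_b).\<close>

definition hf_to_ea :: "('o, 'h, 'z) hfcat_scheme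
                        \<Rightarrow> ('o, 'o \<times> 'o \<times> 'h, ('o \<times> 'o \<times> 'h) \<times> ('o \<times> 'o \<times> 'h)) eacat" where
  "hf_to_ea H = (let
      A1 = {(a, b, f). a \<in> Ob H \<and> b \<in> Ob H \<and> f \<in> Hom H a b};
      E1 = (\<lambda>(a, b, f) (a', b', f'). obeq H a a' \<and> obeq H b b' \<and> homeq H a' b' (tr H a b a' b' f) f')
    in \<lparr>
     C0 = Ob H,
     eq0 = obeq H,
     C1 = A1,
     eq1 = E1,
     C2 = {(F, G). F \<in> A1 \<and> G \<in> A1 \<and> obeq H (fst (snd F)) (fst G)},
     eq2 = (\<lambda>(F, G) (F', G'). E1 F F' \<and> E1 G G'),
     ea_id = (\<lambda>a. (a, a, hid H a)),
     ea_dom = (\<lambda>(a, b, f). a),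
     ea_cod = (\<lambda>(a, b, f). b),
     ea_cmp = (\<lambda>((a, b, f), (c, d, g)).
                 (a, d, hcomp H a c d g (hcomp H a b c (tr H b b b c (hid H b)) f))),
     ea_fst = (\<lambda>(F, G). F),
     ea_snd = (\<lambda>(F, G). G)
   \<rparr>)"

end

theory Submission
  imports Defs
begin

locale eac =
  fixes C :: "('o, 'm, 'c, 'z) eacat_scheme"
  assumes ax: "is_eacat C"
begin

abbreviation "O0 \<equiv> C0 C"
abbreviation "O1 \<equiv> C1 C"
abbreviation "O2 \<equiv> C2 C"
abbreviation "e0 \<equiv> eq0 C"
abbreviation "e1 \<equiv> eq1 C"
abbreviation "e2 \<equiv> eq2 C"

lemma P: "setoid O0 e0" "setoid O1 e1" "setoid O2 e2"
  "ext_fun O0 e0 O1 e1 (ea_id C)" "ext_fun O1 e1 O0 e0 (ea_dom C)" "ext_fun O1 e1 O0 e0 (ea_cod C)"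
  "ext_fun O2 e2 O1 e1 (ea_cmp C)" "ext_fun O2 e2 O1 e1 (ea_fst C)" "ext_fun O2 e2 O1 e1 (ea_snd C)"
  using ax unfolding is_eacat_def by auto
lemma Q: "\<forall>x\<in>O0. e0 (ea_dom C (ea_id C x)) x"
     "\<forall>x\<in>O0. e0 (ea_cod C (ea_id C x)) x"
     "\<forall>u\<in>O2. e0 (ea_dom C (ea_cmp C u)) (ea_dom C (ea_fst C u))"
     "\<forall>u\<in>O2. e0 (ea_cod C (ea_cmp C u)) (ea_cod C (ea_snd C u))"
     "\<forall>u\<in>O2. \<forall>v\<in>O2. e1 (ea_fst C u) (ea_fst C v) \<longrightarrow>
         e1 (ea_snd C u) (ea_snd C v) \<longrightarrow> e2 u v"
     "\<forall>f\<in>O1. \<forall>g\<in>O1. e0 (ea_dom C f) (ea_cod C g) \<longrightarrow>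
         (\<exists>u\<in>O2. e1 (ea_snd C u) f \<and> e1 (ea_fst C u) g)"
     "\<forall>u\<in>O2. \<forall>y\<in>O0. e1 (ea_fst C u) (ea_id C y) \<longrightarrow>
         e1 (ea_cmp C u) (ea_snd C u)"
     "\<forall>u\<in>O2. \<forall>x\<in>O0. e1 (ea_snd C u) (ea_id C x) \<longrightarrow>
         e1 (ea_cmp C u) (ea_fst C u)"
     "\<forall>w\<in>O2. \<forall>v\<in>O2. \<forall>u\<in>O2. \<forall>z\<in>O2.
         e1 (ea_fst C w) (ea_fst C v) \<longrightarrow>
         e1 (ea_snd C v) (ea_fst C u) \<longrightarrow>
         e1 (ea_snd C u) (ea_snd C z) \<longrightarrow>
         e1 (ea_snd C w) (ea_cmp C u) \<longrightarrow>
         e1 (ea_cmp C v) (ea_fst C z) \<longrightarrow>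
         e1 (ea_cmp C w) (ea_cmp C z)"
  using ax unfolding is_eacat_def by auto
lemma r0: "x \<in> O0 \<Longrightarrow> e0 x x" using P(1) unfolding setoid_def ext_fun_def by blast
lemma s0: "x \<in> O0 \<Longrightarrow> y \<in> O0 \<Longrightarrow> e0 x y \<Longrightarrow> e0 y x" using P(1) unfolding setoid_def ext_fun_def by blast
lemma t0: "x \<in> O0 \<Longrightarrow> y \<in> O0 \<Longrightarrow> z \<in> O0 \<Longrightarrow> e0 x y \<Longrightarrow> e0 y z \<Longrightarrow> e0 x z" using P(1) unfolding setoid_def ext_fun_def by blast
lemma r1: "x \<in> O1 \<Longrightarrow> e1 x x" using P(2) unfolding setoid_def ext_fun_def by blast
lemma s1: "x \<in> O1 \<Longrightarrow> y \<in> O1 \<Longrightarrow> e1 x y \<Longrightarrow> e1 y x" using P(2) unfolding setoid_def ext_fun_def by blast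
lemma t1: "x \<in> O1 \<Longrightarrow> y \<in> O1 \<Longrightarrow> z \<in> O1 \<Longrightarrow> e1 x y \<Longrightarrow> e1 y z \<Longrightarrow> e1 x z" using P(2) unfolding setoid_def ext_fun_def by blast
lemma idC: "x \<in> O0 \<Longrightarrow> ea_id C x \<in> O1" using P(4) unfolding setoid_def ext_fun_def by blast
lemma id_ext: "x \<in> O0 \<Longrightarrow> y \<in> O0 \<Longrightarrow> e0 x y \<Longrightarrow> e1 (ea_id C x) (ea_id C y)" using P(4) unfolding setoid_def ext_fun_def by blast
lemma domC: "x \<in> O1 \<Longrightarrow> ea_dom C x \<in> O0" using P(5) unfolding setoid_def ext_fun_def by blast
lemma dom_ext: "x \<in> O1 \<Longrightarrow> y \<in> O1 \<Longrightarrow> e1 x y \<Longrightarrow> e0 (ea_dom C x) (ea_dom C y)" using P(5) unfolding setoid_def ext_fun_def by blast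
lemma codC: "x \<in> O1 \<Longrightarrow> ea_cod C x \<in> O0" using P(6) unfolding setoid_def ext_fun_def by blast
lemma cod_ext: "x \<in> O1 \<Longrightarrow> y \<in> O1 \<Longrightarrow> e1 x y \<Longrightarrow> e0 (ea_cod C x) (ea_cod C y)" using P(6) unfolding setoid_def ext_fun_def by blast
lemma cmpC: "x \<in> O2 \<Longrightarrow> ea_cmp C x \<in> O1" using P(7) unfolding setoid_def ext_fun_def by blast
lemma cmp_ext: "x \<in> O2 \<Longrightarrow> y \<in> O2 \<Longrightarrow> e2 x y \<Longrightarrow> e1 (ea_cmp C x) (ea_cmp C y)" using P(7) unfolding setoid_def ext_fun_def by blast
lemma fstC: "x \<in> O2 \<Longrightarrow> ea_fst C x \<in> O1" using P(8) unfolding setoid_def ext_fun_def by blast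
lemma sndC: "x \<in> O2 \<Longrightarrow> ea_snd C x \<in> O1" using P(9) unfolding setoid_def ext_fun_def by blast
lemma A1: "x \<in> O0 \<Longrightarrow> e0 (ea_dom C (ea_id C x)) x" using Q(1) by blast
lemma A2: "x \<in> O0 \<Longrightarrow> e0 (ea_cod C (ea_id C x)) x" using Q(2) by blast
lemma A3: "u \<in> O2 \<Longrightarrow> e0 (ea_dom C (ea_cmp C u)) (ea_dom C (ea_fst C u))" using Q(3) by blast
lemma A4: "u \<in> O2 \<Longrightarrow> e0 (ea_cod C (ea_cmp C u)) (ea_cod C (ea_snd C u))" using Q(4) by blast
lemma A5: "u \<in> O2 \<Longrightarrow> v \<in> O2 \<Longrightarrow> e1 (ea_fst C u) (ea_fst C v) \<Longrightarrow> e1 (ea_snd C u) (ea_snd C v) \<Longrightarrow> e2 u v" using Q(5) by blast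
lemma A6: "f \<in> O1 \<Longrightarrow> g \<in> O1 \<Longrightarrow> e0 (ea_dom C f) (ea_cod C g) \<Longrightarrow> \<exists>u\<in>O2. e1 (ea_snd C u) f \<and> e1 (ea_fst C u) g" using Q(6) by blast
lemma A7: "u \<in> O2 \<Longrightarrow> y \<in> O0 \<Longrightarrow> e1 (ea_fst C u) (ea_id C y) \<Longrightarrow> e1 (ea_cmp C u) (ea_snd C u)" using Q(7) by blast
lemma A8: "u \<in> O2 \<Longrightarrow> x \<in> O0 \<Longrightarrow> e1 (ea_snd C u) (ea_id C x) \<Longrightarrow> e1 (ea_cmp C u) (ea_fst C u)" using Q(8) by blast
lemma A9: "w \<in> O2 \<Longrightarrow> v \<in> O2 \<Longrightarrow> u \<in> O2 \<Longrightarrow> z \<in> O2 \<Longrightarrow>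
         e1 (ea_fst C w) (ea_fst C v) \<Longrightarrow>
         e1 (ea_snd C v) (ea_fst C u) \<Longrightarrow>
         e1 (ea_snd C u) (ea_snd C z) \<Longrightarrow>
         e1 (ea_snd C w) (ea_cmp C u) \<Longrightarrow>
         e1 (ea_cmp C v) (ea_fst C z) \<Longrightarrow>
         e1 (ea_cmp C w) (ea_cmp C z)" using Q(9) by blast

definition Hm where "Hm a b = {f \<in> O1. e0 (ea_dom C f) a \<and> e0 (ea_cod C f) b}"
definition SU where "SU g f = (SOME u. u \<in> O2 \<and> e1 (ea_snd C u) g \<and> e1 (ea_fst C u) f)"
definition cp where "cp g f = ea_cmp C (SU g f)"

lemma Hm_tr: "a \<in> O0 \<Longrightarrow> b \<in> O0 \<Longrightarrow> a' \<in> O0 \<Longrightarrow> b' \<in> O0 \<Longrightarrow> e0 a a' \<Longrightarrow> e0 b b' \<Longrightarrow> f \<in> Hm a b \<Longrightarrow> f \<in> Hm a' b'"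
  unfolding Hm_def using t0 domC codC by blast

lemma SU: assumes "a \<in> O0" "b \<in> O0" "c \<in> O0" "g \<in> Hm b c" "f \<in> Hm a b"
  shows "SU g f \<in> O2 \<and> e1 (ea_snd C (SU g f)) g \<and> e1 (ea_fst C (SU g f)) f"
proof -
  have h: "g \<in> O1" "e0 (ea_dom C g) b" "f \<in> O1" "e0 (ea_cod C f) b" using assms unfolding Hm_def by auto
  have "e0 (ea_dom C g) (ea_cod C f)" using h assms t0[of "ea_dom C g" b "ea_cod C f"] s0[of "ea_cod C f" b] domC[of g] codC[of f] by blast
  then have "\<exists>u. u \<in> O2 \<and> e1 (ea_snd C u) g \<and> e1 (ea_fst C u) f" using A6 assms unfolding Hm_def by blast
  then show ?thesis unfolding SU_def by (rule someI_ex)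
qed

lemma cp_in: assumes "a \<in> O0" "b \<in> O0" "c \<in> O0" "g \<in> Hm b c" "f \<in> Hm a b"
  shows "cp g f \<in> Hm a c"
proof -
  note u = SU[OF assms]
  let ?u = "SU g f"
  have f: "f \<in> O1" "g \<in> O1" using assms unfolding Hm_def by auto
  have "e0 (ea_dom C (ea_cmp C ?u)) (ea_dom C (ea_fst C ?u))" using A3 u by blast
  moreover have "e0 (ea_dom C (ea_fst C ?u)) (ea_dom C f)" using dom_ext u fstC f by blast
  moreover have "e0 (ea_dom C f) a" using assms unfolding Hm_def by auto
  ultimately have 1: "e0 (ea_dom C (ea_cmp C ?u)) a" using t0[of "ea_dom C (ea_cmp C ?u)" "ea_dom C (ea_fst C ?u)" "ea_dom C f"] t0[of "ea_dom C (ea_cmp C ?u)" "ea_dom C f" a] domC cmpC fstC u f assms by blast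
  have "e0 (ea_cod C (ea_cmp C ?u)) (ea_cod C (ea_snd C ?u))" using A4 u by blast
  moreover have "e0 (ea_cod C (ea_snd C ?u)) (ea_cod C g)" using cod_ext u sndC f by blast
  moreover have "e0 (ea_cod C g) c" using assms unfolding Hm_def by auto
  ultimately have 2: "e0 (ea_cod C (ea_cmp C ?u)) c" using t0[of "ea_cod C (ea_cmp C ?u)" "ea_cod C (ea_snd C ?u)" "ea_cod C g"] t0[of "ea_cod C (ea_cmp C ?u)" "ea_cod C g" c] codC cmpC sndC u f assms by blast
  show ?thesis unfolding Hm_def cp_def using 1 2 cmpC u by blast
qed

lemma cp_ext: assumes "a \<in> O0" "b \<in> O0" "c \<in> O0" "g \<in> Hm b c" "f \<in> Hm a b" "g' \<in> Hm b c" "f' \<in> Hm a b"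
  "e1 g g'" "e1 f f'"
  shows "e1 (cp g f) (cp g' f')"
proof -
  note u = SU[OF assms(1-5)] and v = SU[OF assms(1-3,6,7)]
  have f: "f \<in> O1" "g \<in> O1" "f' \<in> O1" "g' \<in> O1" using assms unfolding Hm_def by auto
  have "e1 (ea_fst C (SU g f)) (ea_fst C (SU g' f'))" using u v f assms(9) fstC t1[of "ea_fst C (SU g f)" f f'] t1[of "ea_fst C (SU g f)" f' "ea_fst C (SU g' f')"] s1[of "ea_fst C (SU g' f')" f'] by blast
  moreover have "e1 (ea_snd C (SU g f)) (ea_snd C (SU g' f'))" using u v f assms(8) sndC t1[of "ea_snd C (SU g f)" g g'] t1[of "ea_snd C (SU g f)" g' "ea_snd C (SU g' f')"] s1[of "ea_snd C (SU g' f')" g'] by blast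
  ultimately show ?thesis unfolding cp_def using A5 cmp_ext u v by blast
qed

lemma lid: assumes "a \<in> O0" "b \<in> O0" "f \<in> Hm a b" shows "e1 (cp (ea_id C b) f) f"
proof -
  have i: "ea_id C b \<in> Hm b b" unfolding Hm_def using idC A1 A2 assms by blast
  note u = SU[OF assms(1,2,2) i assms(3)]
  have f: "f \<in> O1" using assms unfolding Hm_def by auto
  have "e1 (ea_cmp C (SU (ea_id C b) f)) (ea_fst C (SU (ea_id C b) f))" using A8 u assms by blast
  then show ?thesis unfolding cp_def using u f t1[of "ea_cmp C (SU (ea_id C b) f)" "ea_fst C (SU (ea_id C b) f)" f] cmpC fstC by blast
qed

lemma rid: assumes "a \<in> O0" "b \<in> O0" "f \<in> Hm a b" shows "e1 (cp f (ea_id C a)) f"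
proof -
  have i: "ea_id C a \<in> Hm a a" unfolding Hm_def using idC A1 A2 assms by blast
  note u = SU[OF assms(1,1,2) assms(3) i]
  have f: "f \<in> O1" using assms unfolding Hm_def by auto
  have "e1 (ea_cmp C (SU f (ea_id C a))) (ea_snd C (SU f (ea_id C a)))" using A7 u assms by blast
  then show ?thesis unfolding cp_def using u f t1[of "ea_cmp C (SU f (ea_id C a))" "ea_snd C (SU f (ea_id C a))" f] cmpC sndC by blast
qed

lemma assoc: assumes "a \<in> O0" "b \<in> O0" "c \<in> O0" "d \<in> O0" "h \<in> Hm c d" "g \<in> Hm b c" "f \<in> Hm a b"
  shows "e1 (cp h (cp g f)) (cp (cp h g) f)"
proof -
  have f: "f \<in> O1" "g \<in> O1" "h \<in> O1" using assms unfolding Hm_def by auto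
  have gf: "cp g f \<in> Hm a c" by (rule cp_in[OF assms(1,2,3,6,7)])
  have hg: "cp h g \<in> Hm b d" by (rule cp_in[OF assms(2,3,4,5,6)])
  note v = SU[OF assms(1-3,6,7)] and u = SU[OF assms(2-5,6)]
  note z = SU[OF assms(1,3,4,5) gf] and w = SU[OF assms(1,2,4) hg assms(7)]
  have c1: "cp g f \<in> O1" "cp h g \<in> O1" using gf hg unfolding Hm_def by auto
  have v1: "SU g f \<in> O2" and v2: "e1 (ea_snd C (SU g f)) g" and v3: "e1 (ea_fst C (SU g f)) f" using v by auto
  have u1: "SU h g \<in> O2" and u2: "e1 (ea_snd C (SU h g)) h" and u3: "e1 (ea_fst C (SU h g)) g" using u by auto
  have z1: "SU h (cp g f) \<in> O2" and z2: "e1 (ea_snd C (SU h (cp g f))) h" and z3: "e1 (ea_fst C (SU h (cp g f))) (cp g f)" using z by auto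
  have w1: "SU (cp h g) f \<in> O2" and w2: "e1 (ea_snd C (SU (cp h g) f)) (cp h g)" and w3: "e1 (ea_fst C (SU (cp h g) f)) f" using w by auto
  have "e1 (ea_cmp C (SU (cp h g) f)) (ea_cmp C (SU h (cp g f)))"
  proof (rule A9[OF w1 v1 u1 z1])
    show "e1 (ea_fst C (SU (cp h g) f)) (ea_fst C (SU g f))"
      by (rule t1[OF fstC[OF w1] f(1) fstC[OF v1] w3 s1[OF fstC[OF v1] f(1) v3]])
    show "e1 (ea_snd C (SU g f)) (ea_fst C (SU h g))"
      by (rule t1[OF sndC[OF v1] f(2) fstC[OF u1] v2 s1[OF fstC[OF u1] f(2) u3]])
    show "e1 (ea_snd C (SU h g)) (ea_snd C (SU h (cp g f)))"
      by (rule t1[OF sndC[OF u1] f(3) sndC[OF z1] u2 s1[OF sndC[OF z1] f(3) z2]])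
    show "e1 (ea_snd C (SU (cp h g) f)) (ea_cmp C (SU h g))" using w2 unfolding cp_def .
    show "e1 (ea_cmp C (SU g f)) (ea_fst C (SU h (cp g f)))"
      using s1[OF fstC[OF z1] c1(1) z3] unfolding cp_def .
  qed
  then have "e1 (ea_cmp C (SU h (cp g f))) (ea_cmp C (SU (cp h g) f))" by (rule s1[OF cmpC[OF w1] cmpC[OF z1]])
  then show ?thesis by (simp only: cp_def)
qed

theorem part1: "is_hfcat (ea_to_hf C)"
proof -
  have hm: "\<And>a b. {f \<in> C1 C. eq0 C (ea_dom C f) a \<and> eq0 C (ea_cod C f) b} = Hm a b" unfolding Hm_def ..
  have cpd: "\<And>g f. ea_cmp C (SOME u. u \<in> C2 C \<and> eq1 C (ea_snd C u) g \<and> eq1 C (ea_fst C u) f) = cp g f"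
    unfolding cp_def SU_def ..
  have HmC: "\<And>a b f. f \<in> Hm a b \<Longrightarrow> f \<in> O1" unfolding Hm_def by auto
  have idH: "\<And>a. a \<in> O0 \<Longrightarrow> ea_id C a \<in> Hm a a" unfolding Hm_def using idC A1 A2 by blast
  show ?thesis
    unfolding is_hfcat_def ea_to_hf_def hfcat.simps hm cpd
  proof (intro conjI ballI impI allI)
    show "setoid O0 e0" using ax unfolding is_eacat_def by (elim conjE) blast
    show "\<And>a b. setoid (Hm a b) e1" unfolding setoid_def using r1 s1 t1 HmC by blast
    show "\<And>a b a' b'. a \<in> O0 \<Longrightarrow> b \<in> O0 \<Longrightarrow> a' \<in> O0 \<Longrightarrow> b' \<in> O0 \<Longrightarrow> e0 a a' \<Longrightarrow> e0 b b' \<Longrightarrow>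
        ext_fun (Hm a b) e1 (Hm a' b') e1 (\<lambda>f. f)" unfolding ext_fun_def using Hm_tr by blast
    show "\<And>a b f. f \<in> Hm a b \<Longrightarrow> e1 f f" using r1 HmC by blast
    show "\<And>a b a' b' a'' b'' f. f \<in> Hm a b \<Longrightarrow> e1 f f" using r1 HmC by blast
    show "\<And>a. a \<in> O0 \<Longrightarrow> ea_id C a \<in> Hm a a" by (rule idH)
    show "\<And>a b c g f. a \<in> O0 \<Longrightarrow> b \<in> O0 \<Longrightarrow> c \<in> O0 \<Longrightarrow> g \<in> Hm b c \<Longrightarrow> f \<in> Hm a b \<Longrightarrow> cp g f \<in> Hm a c"
      by (rule cp_in)
    show "\<And>a b c g g' f f'. a \<in> O0 \<Longrightarrow> b \<in> O0 \<Longrightarrow> c \<in> O0 \<Longrightarrow> g \<in> Hm b c \<Longrightarrow> g' \<in> Hm b c \<Longrightarrow>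
       f \<in> Hm a b \<Longrightarrow> f' \<in> Hm a b \<Longrightarrow> e1 g g' \<Longrightarrow> e1 f f' \<Longrightarrow> e1 (cp g f) (cp g' f')"
      using cp_ext by blast
    show "\<And>a b f. a \<in> O0 \<Longrightarrow> b \<in> O0 \<Longrightarrow> f \<in> Hm a b \<Longrightarrow> e1 (cp (ea_id C b) f) f" by (rule lid)
    show "\<And>a b f. a \<in> O0 \<Longrightarrow> b \<in> O0 \<Longrightarrow> f \<in> Hm a b \<Longrightarrow> e1 (cp f (ea_id C a)) f" by (rule rid)
    show "\<And>a b c d h g f. a \<in> O0 \<Longrightarrow> b \<in> O0 \<Longrightarrow> c \<in> O0 \<Longrightarrow> d \<in> O0 \<Longrightarrow> h \<in> Hm c d \<Longrightarrow> g \<in> Hm b c \<Longrightarrow> f \<in> Hm a b \<Longrightarrow>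
       e1 (cp h (cp g f)) (cp (cp h g) f)" by (rule assoc)
    show "\<And>a a'. a \<in> O0 \<Longrightarrow> a' \<in> O0 \<Longrightarrow> e0 a a' \<Longrightarrow> e1 (ea_id C a') (ea_id C a)"
      using id_ext s0 by blast
    show "\<And>a b c a' b' c' g f. a \<in> O0 \<Longrightarrow> b \<in> O0 \<Longrightarrow> c \<in> O0 \<Longrightarrow> a' \<in> O0 \<Longrightarrow> b' \<in> O0 \<Longrightarrow> c' \<in> O0 \<Longrightarrow>
       e0 a a' \<Longrightarrow> e0 b b' \<Longrightarrow> e0 c c' \<Longrightarrow> g \<in> Hm b c \<Longrightarrow> f \<in> Hm a b \<Longrightarrow> e1 (cp g f) (cp g f)"
      using cp_in r1 HmC by blast
  qed
qed

end

locale hfc =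
  fixes H :: "('p, 'h, 'z) hfcat_scheme"
  assumes ax: "is_hfcat H"
begin

abbreviation "Obs \<equiv> Ob H"
abbreviation "oe \<equiv> obeq H"
abbreviation "Hm \<equiv> Hom H"
abbreviation "he \<equiv> homeq H"
abbreviation "T \<equiv> tr H"
abbreviation "hi \<equiv> hid H"
abbreviation "cp \<equiv> hcomp H"

lemma P: "setoid Obs oe" "\<forall>a\<in>Obs. \<forall>b\<in>Obs. setoid (Hm a b) (he a b)"
     "(\<forall>a\<in>Obs. \<forall>b\<in>Obs. \<forall>a'\<in>Obs. \<forall>b'\<in>Obs. oe a a' \<longrightarrow> oe b b' \<longrightarrow>
         ext_fun (Hm a b) (he a b) (Hm a' b') (he a' b') (T a b a' b'))"
     "(\<forall>a\<in>Obs. \<forall>b\<in>Obs. \<forall>f\<in>Hm a b. he a b (T a b a b f) f)"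
     "(\<forall>a\<in>Obs. \<forall>b\<in>Obs. \<forall>a'\<in>Obs. \<forall>b'\<in>Obs. \<forall>a''\<in>Obs. \<forall>b''\<in>Obs.
         oe a a' \<longrightarrow> oe b b' \<longrightarrow> oe a' a'' \<longrightarrow> oe b' b'' \<longrightarrow>
         (\<forall>f\<in>Hm a b. he a'' b''
              (T a' b' a'' b'' (T a b a' b' f)) (T a b a'' b'' f)))"
     "(\<forall>a\<in>Obs. hi a \<in> Hm a a)"
     "(\<forall>a\<in>Obs. \<forall>b\<in>Obs. \<forall>c\<in>Obs. \<forall>g\<in>Hm b c. \<forall>f\<in>Hm a b.
         cp a b c g f \<in> Hm a c)"
     "(\<forall>a\<in>Obs. \<forall>b\<in>Obs. \<forall>c\<in>Obs. \<forall>g\<in>Hm b c. \<forall>g'\<in>Hm b c.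
         \<forall>f\<in>Hm a b. \<forall>f'\<in>Hm a b.
         he b c g g' \<longrightarrow> he a b f f' \<longrightarrow>
         he a c (cp a b c g f) (cp a b c g' f'))"
     "(\<forall>a\<in>Obs. \<forall>b\<in>Obs. \<forall>f\<in>Hm a b.
         he a b (cp a b b (hi b) f) f \<and>
         he a b (cp a a b f (hi a)) f)"
     "(\<forall>a\<in>Obs. \<forall>b\<in>Obs. \<forall>c\<in>Obs. \<forall>d\<in>Obs.
         \<forall>h\<in>Hm c d. \<forall>g\<in>Hm b c. \<forall>f\<in>Hm a b.
         he a d (cp a c d h (cp a b c g f))
                     (cp a b d (cp b c d h g) f))"
     "(\<forall>a\<in>Obs. \<forall>a'\<in>Obs. oe a a' \<longrightarrow>
         he a' a' (hi a') (T a a a' a' (hi a)))"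
     "(\<forall>a\<in>Obs. \<forall>b\<in>Obs. \<forall>c\<in>Obs. \<forall>a'\<in>Obs. \<forall>b'\<in>Obs. \<forall>c'\<in>Obs.
         oe a a' \<longrightarrow> oe b b' \<longrightarrow> oe c c' \<longrightarrow>
         (\<forall>g\<in>Hm b c. \<forall>f\<in>Hm a b.
            he a' c' (T a c a' c' (cp a b c g f))
                          (cp a' b' c' (T b c b' c' g) (T a b a' b' f))))"
  using ax unfolding is_hfcat_def by auto

lemma or: "a \<in> Obs \<Longrightarrow> oe a a" using P(1) unfolding setoid_def by blast
lemma os: "a \<in> Obs \<Longrightarrow> b \<in> Obs \<Longrightarrow> oe a b \<Longrightarrow> oe b a" using P(1) unfolding setoid_def by blast
lemma ot: "a \<in> Obs \<Longrightarrow> b \<in> Obs \<Longrightarrow> c \<in> Obs \<Longrightarrow> oe a b \<Longrightarrow> oe b c \<Longrightarrow> oe a c" using P(1) unfolding setoid_def by blast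
lemma hr: "a \<in> Obs \<Longrightarrow> b \<in> Obs \<Longrightarrow> f \<in> Hm a b \<Longrightarrow> he a b f f" using P(2) unfolding setoid_def by blast
lemma hs: "a \<in> Obs \<Longrightarrow> b \<in> Obs \<Longrightarrow> f \<in> Hm a b \<Longrightarrow> g \<in> Hm a b \<Longrightarrow> he a b f g \<Longrightarrow> he a b g f"
  using P(2) unfolding setoid_def by blast
lemma ht: "a \<in> Obs \<Longrightarrow> b \<in> Obs \<Longrightarrow> f \<in> Hm a b \<Longrightarrow> g \<in> Hm a b \<Longrightarrow> k \<in> Hm a b \<Longrightarrow> he a b f g \<Longrightarrow> he a b g k \<Longrightarrow> he a b f k"
  using P(2) unfolding setoid_def by blast
lemma tr_in: "a \<in> Obs \<Longrightarrow> b \<in> Obs \<Longrightarrow> a' \<in> Obs \<Longrightarrow> b' \<in> Obs \<Longrightarrow> oe a a' \<Longrightarrow> oe b b' \<Longrightarrow> f \<in> Hm a b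
   \<Longrightarrow> T a b a' b' f \<in> Hm a' b'" using P(3) unfolding ext_fun_def by blast
lemma tr_ext: "a \<in> Obs \<Longrightarrow> b \<in> Obs \<Longrightarrow> a' \<in> Obs \<Longrightarrow> b' \<in> Obs \<Longrightarrow> oe a a' \<Longrightarrow> oe b b' \<Longrightarrow> f \<in> Hm a b
   \<Longrightarrow> g \<in> Hm a b \<Longrightarrow> he a b f g \<Longrightarrow> he a' b' (T a b a' b' f) (T a b a' b' g)" using P(3) unfolding ext_fun_def by blast
lemma F1: "a \<in> Obs \<Longrightarrow> b \<in> Obs \<Longrightarrow> f \<in> Hm a b \<Longrightarrow> he a b (T a b a b f) f" using P(4) by blast
lemma F3: "a \<in> Obs \<Longrightarrow> b \<in> Obs \<Longrightarrow> a' \<in> Obs \<Longrightarrow> b' \<in> Obs \<Longrightarrow> a'' \<in> Obs \<Longrightarrow> b'' \<in> Obs \<Longrightarrow>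
  oe a a' \<Longrightarrow> oe b b' \<Longrightarrow> oe a' a'' \<Longrightarrow> oe b' b'' \<Longrightarrow> f \<in> Hm a b \<Longrightarrow>
  he a'' b'' (T a' b' a'' b'' (T a b a' b' f)) (T a b a'' b'' f)" using P(5) by blast
lemma id_in: "a \<in> Obs \<Longrightarrow> hi a \<in> Hm a a" using P(6) by blast
lemma cp_in: "a \<in> Obs \<Longrightarrow> b \<in> Obs \<Longrightarrow> c \<in> Obs \<Longrightarrow> g \<in> Hm b c \<Longrightarrow> f \<in> Hm a b \<Longrightarrow> cp a b c g f \<in> Hm a c"
  using P(7) by blast
lemma cp_ext: "a \<in> Obs \<Longrightarrow> b \<in> Obs \<Longrightarrow> c \<in> Obs \<Longrightarrow> g \<in> Hm b c \<Longrightarrow> g' \<in> Hm b c \<Longrightarrow> f \<in> Hm a b \<Longrightarrow> f' \<in> Hm a b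
  \<Longrightarrow> he b c g g' \<Longrightarrow> he a b f f' \<Longrightarrow> he a c (cp a b c g f) (cp a b c g' f')"
  using P(8) by blast
lemma lid: "a \<in> Obs \<Longrightarrow> b \<in> Obs \<Longrightarrow> f \<in> Hm a b \<Longrightarrow> he a b (cp a b b (hi b) f) f" using P(9) by blast
lemma rid: "a \<in> Obs \<Longrightarrow> b \<in> Obs \<Longrightarrow> f \<in> Hm a b \<Longrightarrow> he a b (cp a a b f (hi a)) f" using P(9) by blast
lemma assoc: "a \<in> Obs \<Longrightarrow> b \<in> Obs \<Longrightarrow> c \<in> Obs \<Longrightarrow> d \<in> Obs \<Longrightarrow> h \<in> Hm c d \<Longrightarrow> g \<in> Hm b c \<Longrightarrow> f \<in> Hm a b \<Longrightarrow>
  he a d (cp a c d h (cp a b c g f)) (cp a b d (cp b c d h g) f)" using P(10) by blast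
lemma cid: "a \<in> Obs \<Longrightarrow> a' \<in> Obs \<Longrightarrow> oe a a' \<Longrightarrow> he a' a' (hi a') (T a a a' a' (hi a))" using P(11) by blast
lemma ccomp: "a \<in> Obs \<Longrightarrow> b \<in> Obs \<Longrightarrow> c \<in> Obs \<Longrightarrow> a' \<in> Obs \<Longrightarrow> b' \<in> Obs \<Longrightarrow> c' \<in> Obs \<Longrightarrow>
  oe a a' \<Longrightarrow> oe b b' \<Longrightarrow> oe c c' \<Longrightarrow> g \<in> Hm b c \<Longrightarrow> f \<in> Hm a b \<Longrightarrow>
  he a' c' (T a c a' c' (cp a b c g f)) (cp a' b' c' (T b c b' c' g) (T a b a' b' f))"
  using P(12) by blast

definition A where "A = {(a, b, f). a \<in> Ob H \<and> b \<in> Ob H \<and> f \<in> Hom H a b}"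
definition E where "E = (\<lambda>(a, b, f) (a', b', f'). obeq H a a' \<and> obeq H b b' \<and> homeq H a' b' (tr H a b a' b' f) f')"

lemma inA[simp]: "(a, b, f) \<in> A \<longleftrightarrow> a \<in> Obs \<and> b \<in> Obs \<and> f \<in> Hm a b" unfolding A_def by simp
lemma E_simp[simp]: "E (a, b, f) (a', b', f') \<longleftrightarrow> oe a a' \<and> oe b b' \<and> he a' b' (T a b a' b' f) f'"
  unfolding E_def by simp

lemma E_refl: assumes "a \<in> Obs" "b \<in> Obs" "f \<in> Hm a b" shows "E (a, b, f) (a, b, f)"
  using or[OF assms(1)] or[OF assms(2)] F1[OF assms] by simp

lemma E_sym: assumes o: "a \<in> Obs" "b \<in> Obs" "a' \<in> Obs" "b' \<in> Obs" and f: "f \<in> Hm a b" "f' \<in> Hm a' b'"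
  and e: "E (a, b, f) (a', b', f')" shows "E (a', b', f') (a, b, f)"
proof -
  have e1: "oe a a'" "oe b b'" "he a' b' (T a b a' b' f) f'" using e by auto
  have e2: "oe a' a" "oe b' b" using os e1 o by blast+
  have m1: "T a b a' b' f \<in> Hm a' b'" by (rule tr_in[OF o e1(1,2) f(1)])
  have m2: "T a' b' a b f' \<in> Hm a b" by (rule tr_in[OF o(3,4,1,2) e2 f(2)])
  have m3: "T a' b' a b (T a b a' b' f) \<in> Hm a b" by (rule tr_in[OF o(3,4,1,2) e2 m1])
  have m4: "T a b a b f \<in> Hm a b" by (rule tr_in[OF o(1,2,1,2) or[OF o(1)] or[OF o(2)] f(1)])
  have h1: "he a b (T a' b' a b f') (T a' b' a b (T a b a' b' f))"
    by (rule tr_ext[OF o(3,4,1,2) e2 f(2) m1 hs[OF o(3,4) m1 f(2) e1(3)]])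
  have h2: "he a b (T a' b' a b (T a b a' b' f)) (T a b a b f)"
    by (rule F3[OF o(1,2,3,4,1,2) e1(1,2) e2 f(1)])
  have h3: "he a b (T a b a b f) f" by (rule F1[OF o(1,2) f(1)])
  have "he a b (T a' b' a b f') f"
    by (rule ht[OF o(1,2) m2 m4 f(1) ht[OF o(1,2) m2 m3 m4 h1 h2] h3])
  then show ?thesis using e2 by simp
qed

lemma E_trans: assumes o: "a \<in> Obs" "b \<in> Obs" "a' \<in> Obs" "b' \<in> Obs" "a'' \<in> Obs" "b'' \<in> Obs"
  and f: "f \<in> Hm a b" "f' \<in> Hm a' b'" "f'' \<in> Hm a'' b''"
  and e: "E (a, b, f) (a', b', f')" "E (a', b', f') (a'', b'', f'')" shows "E (a, b, f) (a'', b'', f'')"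
proof -
  have e1: "oe a a'" "oe b b'" "he a' b' (T a b a' b' f) f'" using e by auto
  have e2: "oe a' a''" "oe b' b''" "he a'' b'' (T a' b' a'' b'' f') f''" using e by auto
  have e3: "oe a a''" "oe b b''" using ot o e1 e2 by blast+
  have m1: "T a b a' b' f \<in> Hm a' b'" by (rule tr_in[OF o(1-4) e1(1,2) f(1)])
  have m2: "T a' b' a'' b'' (T a b a' b' f) \<in> Hm a'' b''" by (rule tr_in[OF o(3-6) e2(1,2) m1])
  have m3: "T a' b' a'' b'' f' \<in> Hm a'' b''" by (rule tr_in[OF o(3-6) e2(1,2) f(2)])
  have m4: "T a b a'' b'' f \<in> Hm a'' b''" by (rule tr_in[OF o(1,2,5,6) e3 f(1)])
  have h1: "he a'' b'' (T a b a'' b'' f) (T a' b' a'' b'' (T a b a' b' f))"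
    by (rule hs[OF o(5,6) m2 m4 F3[OF o e1(1,2) e2(1,2) f(1)]])
  have h2: "he a'' b'' (T a' b' a'' b'' (T a b a' b' f)) (T a' b' a'' b'' f')"
    by (rule tr_ext[OF o(3-6) e2(1,2) m1 f(2) e1(3)])
  have "he a'' b'' (T a b a'' b'' f) f''"
    by (rule ht[OF o(5,6) m4 m3 f(3) ht[OF o(5,6) m4 m2 m3 h1 h2] e2(3)])
  then show ?thesis using e3 by simp
qed

lemma E_tr: assumes o: "a \<in> Obs" "b \<in> Obs" "a' \<in> Obs" "b' \<in> Obs" "oe a a'" "oe b b'" "f \<in> Hm a b"
  shows "E (a, b, f) (a', b', T a b a' b' f)"
  using o hr[OF o(3,4) tr_in[OF o]] by simp

lemma E_he: assumes "a \<in> Obs" "b \<in> Obs" "f \<in> Hm a b" "g \<in> Hm a b" "he a b f g"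
  shows "E (a, b, f) (a, b, g)"
proof -
  have "he a b (T a b a b f) g"
    by (rule ht[OF assms(1,2) tr_in[OF assms(1,2,1,2) or[OF assms(1)] or[OF assms(2)] assms(3)] assms(3,4)
          F1[OF assms(1-3)] assms(5)])
  then show ?thesis using or assms by simp
qed

lemma E_id: assumes "a \<in> Obs" "a' \<in> Obs" "oe a a'" shows "E (a, a, hi a) (a', a', hi a')"
proof -
  have "he a' a' (T a a a' a' (hi a)) (hi a')"
    by (rule hs[OF assms(2,2) id_in[OF assms(2)] tr_in[OF assms(1,1,2,2,3,3) id_in[OF assms(1)]] cid[OF assms]])
  then show ?thesis using assms by simp
qed

lemma E_cp: assumes o: "a \<in> Obs" "b \<in> Obs" "c \<in> Obs" "a' \<in> Obs" "b' \<in> Obs" "c' \<in> Obs"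
  and f: "f \<in> Hm a b" "g \<in> Hm b c" "f' \<in> Hm a' b'" "g' \<in> Hm b' c'"
  and e: "E (a, b, f) (a', b', f')" "E (b, c, g) (b', c', g')"
  shows "E (a, c, cp a b c g f) (a', c', cp a' b' c' g' f')"
proof -
  have e1: "oe a a'" "oe b b'" "he a' b' (T a b a' b' f) f'" using e by auto
  have e2: "oe c c'" "he b' c' (T b c b' c' g) g'" using e by auto
  have m1: "T a b a' b' f \<in> Hm a' b'" by (rule tr_in[OF o(1,2,4,5) e1(1,2) f(1)])
  have m2: "T b c b' c' g \<in> Hm b' c'" by (rule tr_in[OF o(2,3,5,6) e1(2) e2(1) f(2)])
  have m3: "cp a b c g f \<in> Hm a c" by (rule cp_in[OF o(1-3) f(2,1)])
  have m4: "T a c a' c' (cp a b c g f) \<in> Hm a' c'" by (rule tr_in[OF o(1,3,4,6) e1(1) e2(1) m3])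
  have m5: "cp a' b' c' (T b c b' c' g) (T a b a' b' f) \<in> Hm a' c'" by (rule cp_in[OF o(4-6) m2 m1])
  have m6: "cp a' b' c' g' f' \<in> Hm a' c'" by (rule cp_in[OF o(4-6) f(4,3)])
  have h1: "he a' c' (T a c a' c' (cp a b c g f)) (cp a' b' c' (T b c b' c' g) (T a b a' b' f))"
    by (rule ccomp[OF o e1(1,2) e2(1) f(2,1)])
  have h2: "he a' c' (cp a' b' c' (T b c b' c' g) (T a b a' b' f)) (cp a' b' c' g' f')"
    by (rule cp_ext[OF o(4-6) m2 f(4) m1 f(3) e2(2) e1(3)])
  have "he a' c' (T a c a' c' (cp a b c g f)) (cp a' b' c' g' f')"
    by (rule ht[OF o(4,6) m4 m5 m6 h1 h2])
  then show ?thesis using e1 e2 by simp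
qed


definition TT where "TT b c = T b b b c (hi b)"
definition cm where "cm a b c d f g = cp a c d g (cp a b c (TT b c) f)"

lemma TT_in: "b \<in> Obs \<Longrightarrow> c \<in> Obs \<Longrightarrow> oe b c \<Longrightarrow> TT b c \<in> Hm b c"
  unfolding TT_def by (rule tr_in[OF _ _ _ _ or _ id_in]) auto

lemma E_TT: assumes "b \<in> Obs" "c \<in> Obs" "oe b c" shows "E (b, c, TT b c) (b, b, hi b)"
proof -
  have "E (b, b, hi b) (b, c, TT b c)" unfolding TT_def
    by (rule E_tr[OF assms(1,1,1,2) or[OF assms(1)] assms(3) id_in[OF assms(1)]])
  then show ?thesis by (rule E_sym[OF assms(1,1,1,2) id_in[OF assms(1)] TT_in[OF assms]])
qed

lemma cm_in: "a \<in> Obs \<Longrightarrow> b \<in> Obs \<Longrightarrow> c \<in> Obs \<Longrightarrow> d \<in> Obs \<Longrightarrow> oe b c \<Longrightarrow> f \<in> Hm a b \<Longrightarrow> g \<in> Hm c d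
  \<Longrightarrow> cm a b c d f g \<in> Hm a d"
  unfolding cm_def by (rule cp_in[OF _ _ _ _ cp_in[OF _ _ _ TT_in]]) auto

lemma E_cm: assumes o: "a \<in> Obs" "b \<in> Obs" "c \<in> Obs" "d \<in> Obs" "a' \<in> Obs" "b' \<in> Obs" "c' \<in> Obs" "d' \<in> Obs"
  and bc: "oe b c" "oe b' c'"
  and f: "f \<in> Hm a b" "g \<in> Hm c d" "f' \<in> Hm a' b'" "g' \<in> Hm c' d'"
  and e: "E (a, b, f) (a', b', f')" "E (c, d, g) (c', d', g')"
  shows "E (a, d, cm a b c d f g) (a', d', cm a' b' c' d' f' g')"
proof -
  have bb: "oe b b'" using e by simp
  have t1: "E (b, c, TT b c) (b', c', TT b' c')"
  proof -
    have "E (b, c, TT b c) (b', b', hi b')"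
      by (rule E_trans[OF o(2,3,2,2,6,6) TT_in[OF o(2,3) bc(1)] id_in[OF o(2)] id_in[OF o(6)] E_TT[OF o(2,3) bc(1)]
          E_id[OF o(2,6) bb]])
    moreover have "E (b', b', hi b') (b', c', TT b' c')"
      by (rule E_sym[OF o(6,7,6,6) TT_in[OF o(6,7) bc(2)] id_in[OF o(6)] E_TT[OF o(6,7) bc(2)]])
    ultimately show ?thesis
      by (rule E_trans[OF o(2,3,6,6,6,7) TT_in[OF o(2,3) bc(1)] id_in[OF o(6)] TT_in[OF o(6,7) bc(2)]])
  qed
  have t2: "E (a, c, cp a b c (TT b c) f) (a', c', cp a' b' c' (TT b' c') f')"
    by (rule E_cp[OF o(1,2,3,5,6,7) f(1) TT_in[OF o(2,3) bc(1)] f(3) TT_in[OF o(6,7) bc(2)] e(1) t1])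
  show ?thesis unfolding cm_def
    by (rule E_cp[OF o(1,3,4,5,7,8) cp_in[OF o(1,2,3) TT_in[OF o(2,3) bc(1)] f(1)] f(2)
          cp_in[OF o(5,6,7) TT_in[OF o(6,7) bc(2)] f(3)] f(4) t2 e(2)])
qed

lemma E_A7: assumes o: "a \<in> Obs" "b \<in> Obs" "c \<in> Obs" "d \<in> Obs" "y \<in> Obs" and bc: "oe b c"
  and f: "f \<in> Hm a b" "g \<in> Hm c d" and e: "E (a, b, f) (y, y, hi y)"
  shows "E (a, d, cm a b c d f g) (c, d, g)"
proof -
  have by': "oe b y" using e by simp
  have yc: "oe y c" using ot[OF o(5,2,3) os[OF o(2,5) by'] bc] .
  have fc: "E (a, b, f) (c, c, hi c)"
    by (rule E_trans[OF o(1,2,5,5,3,3) f(1) id_in[OF o(5)] id_in[OF o(3)] e E_id[OF o(5,3) yc]])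
  have tc: "E (b, c, TT b c) (c, c, hi c)"
    by (rule E_trans[OF o(2,3,2,2,3,3) TT_in[OF o(2,3) bc] id_in[OF o(2)] id_in[OF o(3)] E_TT[OF o(2,3) bc] E_id[OF o(2,3) bc]])
  have i1: "E (a, c, cp a b c (TT b c) f) (c, c, cp c c c (hi c) (hi c))"
    by (rule E_cp[OF o(1,2,3,3,3,3) f(1) TT_in[OF o(2,3) bc] id_in[OF o(3)] id_in[OF o(3)] fc tc])
  have i2: "E (c, c, cp c c c (hi c) (hi c)) (c, c, hi c)"
    by (rule E_he[OF o(3,3) cp_in[OF o(3,3,3) id_in[OF o(3)] id_in[OF o(3)]] id_in[OF o(3)] lid[OF o(3,3) id_in[OF o(3)]]])
  have X: "cp a b c (TT b c) f \<in> Hm a c" by (rule cp_in[OF o(1,2,3) TT_in[OF o(2,3) bc] f(1)])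
  have i3: "E (a, c, cp a b c (TT b c) f) (c, c, hi c)"
    by (rule E_trans[OF o(1,3,3,3,3,3) X cp_in[OF o(3,3,3) id_in[OF o(3)] id_in[OF o(3)]] id_in[OF o(3)] i1 i2])
  have o1: "E (a, d, cp a c d g (cp a b c (TT b c) f)) (c, d, cp c c d g (hi c))"
    by (rule E_cp[OF o(1,3,4,3,3,4) X f(2) id_in[OF o(3)] f(2) i3 E_refl[OF o(3,4) f(2)]])
  have o2: "E (c, d, cp c c d g (hi c)) (c, d, g)"
    by (rule E_he[OF o(3,4) cp_in[OF o(3,3,4) f(2) id_in[OF o(3)]] f(2) rid[OF o(3,4) f(2)]])
  show ?thesis unfolding cm_def
    by (rule E_trans[OF o(1,4,3,4,3,4) cp_in[OF o(1,3,4) f(2) X] cp_in[OF o(3,3,4) f(2) id_in[OF o(3)]] f(2) o1 o2])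
qed

lemma E_A8: assumes o: "a \<in> Obs" "b \<in> Obs" "c \<in> Obs" "d \<in> Obs" "x \<in> Obs" and bc: "oe b c"
  and f: "f \<in> Hm a b" "g \<in> Hm c d" and e: "E (c, d, g) (x, x, hi x)"
  shows "E (a, d, cm a b c d f g) (a, b, f)"
proof -
  have cx: "oe c x" using e by simp
  have xb: "oe x b" using ot[OF o(5,3,2) os[OF o(3,5) cx] os[OF o(2,3) bc]] .
  have gb: "E (c, d, g) (b, b, hi b)"
    by (rule E_trans[OF o(3,4,5,5,2,2) f(2) id_in[OF o(5)] id_in[OF o(2)] e E_id[OF o(5,2) xb]])
  have X: "cp a b c (TT b c) f \<in> Hm a c" by (rule cp_in[OF o(1,2,3) TT_in[OF o(2,3) bc] f(1)])
  have lb: "cp a b b (hi b) f \<in> Hm a b" by (rule cp_in[OF o(1,2,2) id_in[OF o(2)] f(1)])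
  have i1: "E (a, c, cp a b c (TT b c) f) (a, b, cp a b b (hi b) f)"
    by (rule E_cp[OF o(1,2,3,1,2,2) f(1) TT_in[OF o(2,3) bc] f(1) id_in[OF o(2)] E_refl[OF o(1,2) f(1)] E_TT[OF o(2,3) bc]])
  have i2: "E (a, b, cp a b b (hi b) f) (a, b, f)"
    by (rule E_he[OF o(1,2) lb f(1) lid[OF o(1,2) f(1)]])
  have i3: "E (a, c, cp a b c (TT b c) f) (a, b, f)"
    by (rule E_trans[OF o(1,3,1,2,1,2) X lb f(1) i1 i2])
  have o1: "E (a, d, cp a c d g (cp a b c (TT b c) f)) (a, b, cp a b b (hi b) f)"
    by (rule E_cp[OF o(1,3,4,1,2,2) X f(2) f(1) id_in[OF o(2)] i3 gb])
  show ?thesis unfolding cm_def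
    by (rule E_trans[OF o(1,4,1,2,1,2) cp_in[OF o(1,3,4) f(2) X] lb f(1) o1 i2])
qed

lemma E_assoc: assumes o: "a \<in> Obs" "b \<in> Obs" "c \<in> Obs" "d \<in> Obs" "e \<in> Obs" "k \<in> Obs"
  and bc: "oe b c" "oe d e" and f: "f \<in> Hm a b" "g \<in> Hm c d" "h \<in> Hm e k"
  shows "E (a, k, cm a b c k f (cm c d e k g h)) (a, k, cm a d e k (cm a b c d f g) h)"
proof -
  define X where "X = cp a b c (TT b c) f"
  define Y where "Y = TT d e"
  define Z where "Z = cp c d e Y g"
  have X: "X \<in> Hm a c" unfolding X_def by (rule cp_in[OF o(1,2,3) TT_in[OF o(2,3) bc(1)] f(1)])
  have Y: "Y \<in> Hm d e" unfolding Y_def by (rule TT_in[OF o(4,5) bc(2)])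
  have Z: "Z \<in> Hm c e" unfolding Z_def by (rule cp_in[OF o(3,4,5) Y f(2)])
  have L: "cm a b c k f (cm c d e k g h) = cp a c k (cp c e k h Z) X"
    unfolding cm_def X_def Y_def Z_def ..
  have R: "cm a d e k (cm a b c d f g) h = cp a e k h (cp a d e Y (cp a c d g X))"
    unfolding cm_def X_def Y_def Z_def ..
  have gx: "cp a c d g X \<in> Hm a d" by (rule cp_in[OF o(1,3,4) f(2) X])
  have m1: "cp a d e Y (cp a c d g X) \<in> Hm a e" by (rule cp_in[OF o(1,4,5) Y gx])
  have m2: "cp a c e Z X \<in> Hm a e" by (rule cp_in[OF o(1,3,5) Z X])
  have m3: "cp c e k h Z \<in> Hm c k" by (rule cp_in[OF o(3,5,6) f(3) Z])
  have h1: "he a k (cp a e k h (cp a c e Z X)) (cp a c k (cp c e k h Z) X)"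
    by (rule assoc[OF o(1,3,5,6) f(3) Z X])
  have h2: "he a e (cp a d e Y (cp a c d g X)) (cp a c e Z X)"
    unfolding Z_def by (rule assoc[OF o(1,3,4,5) Y f(2) X])
  have h3: "he a k (cp a e k h (cp a d e Y (cp a c d g X))) (cp a e k h (cp a c e Z X))"
    by (rule cp_ext[OF o(1,5,6) f(3) f(3) m1 m2 hr[OF o(5,6) f(3)] h2])
  have h4: "he a k (cp a e k h (cp a d e Y (cp a c d g X))) (cp a c k (cp c e k h Z) X)"
    by (rule ht[OF o(1,6) cp_in[OF o(1,5,6) f(3) m1] cp_in[OF o(1,5,6) f(3) m2] cp_in[OF o(1,3,6) m3 X] h3 h1])
  have "E (a, k, cp a e k h (cp a d e Y (cp a c d g X))) (a, k, cp a c k (cp c e k h Z) X)"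
    by (rule E_he[OF o(1,6) cp_in[OF o(1,5,6) f(3) m1] cp_in[OF o(1,3,6) m3 X] h4])
  then have "E (a, k, cp a c k (cp c e k h Z) X) (a, k, cp a e k h (cp a d e Y (cp a c d g X)))"
    by (rule E_sym[OF o(1,6,1,6) cp_in[OF o(1,5,6) f(3) m1] cp_in[OF o(1,3,6) m3 X]])
  then show ?thesis unfolding L R .
qed


definition C2s where "C2s = {(F, G). F \<in> A \<and> G \<in> A \<and> obeq H (fst (snd F)) (fst G)}"
definition E2 where "E2 = (\<lambda>(F, G) (F', G'). E F F' \<and> E G G')"
definition cmpT where "cmpT = (\<lambda>((a, b, f), (c, d, g)).
                 (a, d, hcomp H a c d g (hcomp H a b c (tr H b b b c (hid H b)) f)))"

lemma cmpT_simp: "cmpT ((a, b, f), (c, d, g)) = (a, d, cm a b c d f g)"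
  unfolding cmpT_def cm_def TT_def by simp

lemma A_cases: assumes "x \<in> A"
  obtains a b f where "x = (a, b, f)" "a \<in> Obs" "b \<in> Obs" "f \<in> Hm a b"
  using assms by (cases x) auto

lemma A_dom: "x \<in> A \<Longrightarrow> fst x \<in> Obs" by (erule A_cases) simp
lemma A_cod: "x \<in> A \<Longrightarrow> fst (snd x) \<in> Obs" by (erule A_cases) simp

lemma EA_refl: assumes "x \<in> A" shows "E x x"
proof -
  obtain a b f where x: "x = (a, b, f)" "a \<in> Obs" "b \<in> Obs" "f \<in> Hm a b" using A_cases[OF assms] by blast
  show ?thesis unfolding x(1) by (rule E_refl[OF x(2-4)])
qed

lemma EA_sym: assumes "x \<in> A" "y \<in> A" "E x y" shows "E y x"
proof -
  obtain a b f where x: "x = (a, b, f)" "a \<in> Obs" "b \<in> Obs" "f \<in> Hm a b" using A_cases[OF assms(1)] by blast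
  obtain a' b' f' where y: "y = (a', b', f')" "a' \<in> Obs" "b' \<in> Obs" "f' \<in> Hm a' b'" using A_cases[OF assms(2)] by blast
  show ?thesis using assms(3) unfolding x(1) y(1) by (rule E_sym[OF x(2,3) y(2,3) x(4) y(4)])
qed

lemma EA_trans: assumes "x \<in> A" "y \<in> A" "z \<in> A" "E x y" "E y z" shows "E x z"
proof -
  obtain a b f where x: "x = (a, b, f)" "a \<in> Obs" "b \<in> Obs" "f \<in> Hm a b" using A_cases[OF assms(1)] by blast
  obtain a' b' f' where y: "y = (a', b', f')" "a' \<in> Obs" "b' \<in> Obs" "f' \<in> Hm a' b'" using A_cases[OF assms(2)] by blast
  obtain a'' b'' f'' where z: "z = (a'', b'', f'')" "a'' \<in> Obs" "b'' \<in> Obs" "f'' \<in> Hm a'' b''" using A_cases[OF assms(3)] by blast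
  show ?thesis using assms(4,5) unfolding x(1) y(1) z(1) by (rule E_trans[OF x(2,3) y(2,3) z(2,3) x(4) y(4) z(4)])
qed

lemma EA_dom: "E x y \<Longrightarrow> oe (fst x) (fst y)"
  by (cases x, cases y) simp
lemma EA_cod: "E x y \<Longrightarrow> oe (fst (snd x)) (fst (snd y))"
  by (cases x, cases y) simp

lemma cmpT_fst: "fst (cmpT (x, y)) = fst x"
  by (cases x, cases y) (simp add: cmpT_simp)
lemma cmpT_cod: "fst (snd (cmpT (x, y))) = fst (snd y)"
  by (cases x, cases y) (simp add: cmpT_simp)

lemma cmpT_in: assumes "x \<in> A" "y \<in> A" "oe (fst (snd x)) (fst y)" shows "cmpT (x, y) \<in> A"
proof -
  obtain a b f where x: "x = (a, b, f)" "a \<in> Obs" "b \<in> Obs" "f \<in> Hm a b" using A_cases[OF assms(1)] by blast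
  obtain c d g where y: "y = (c, d, g)" "c \<in> Obs" "d \<in> Obs" "g \<in> Hm c d" using A_cases[OF assms(2)] by blast
  have "oe b c" using assms(3) x y by simp
  then show ?thesis unfolding x(1) y(1) cmpT_simp inA using cm_in[OF x(2,3) y(2,3) _ x(4) y(4)] x y by blast
qed

lemma cmpT_ext: assumes "x \<in> A" "y \<in> A" "x' \<in> A" "y' \<in> A" "oe (fst (snd x)) (fst y)" "oe (fst (snd x')) (fst y')"
  "E x x'" "E y y'" shows "E (cmpT (x, y)) (cmpT (x', y'))"
proof -
  obtain a b f where x: "x = (a, b, f)" "a \<in> Obs" "b \<in> Obs" "f \<in> Hm a b" using A_cases[OF assms(1)] by blast
  obtain c d g where y: "y = (c, d, g)" "c \<in> Obs" "d \<in> Obs" "g \<in> Hm c d" using A_cases[OF assms(2)] by blast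
  obtain a' b' f' where x': "x' = (a', b', f')" "a' \<in> Obs" "b' \<in> Obs" "f' \<in> Hm a' b'" using A_cases[OF assms(3)] by blast
  obtain c' d' g' where y': "y' = (c', d', g')" "c' \<in> Obs" "d' \<in> Obs" "g' \<in> Hm c' d'" using A_cases[OF assms(4)] by blast
  have bc: "oe b c" "oe b' c'" using assms(5,6) x y x' y' by simp_all
  show ?thesis unfolding x(1) y(1) x'(1) y'(1) cmpT_simp
    by (rule E_cm[OF x(2,3) y(2,3) x'(2,3) y'(2,3) bc x(4) y(4) x'(4) y'(4)]) (use assms(7,8) x y x' y' in simp_all)
qed

lemma A7T: assumes "x \<in> A" "y \<in> A" "oe (fst (snd x)) (fst y)" "z \<in> Obs" "E x (z, z, hi z)"
  shows "E (cmpT (x, y)) y"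
proof -
  obtain a b f where x: "x = (a, b, f)" "a \<in> Obs" "b \<in> Obs" "f \<in> Hm a b" using A_cases[OF assms(1)] by blast
  obtain c d g where y: "y = (c, d, g)" "c \<in> Obs" "d \<in> Obs" "g \<in> Hm c d" using A_cases[OF assms(2)] by blast
  have bc: "oe b c" using assms(3) x y by simp
  show ?thesis unfolding x(1) y(1) cmpT_simp
    by (rule E_A7[OF x(2,3) y(2,3) assms(4) bc x(4) y(4)]) (use assms(5) x in simp)
qed

lemma A8T: assumes "x \<in> A" "y \<in> A" "oe (fst (snd x)) (fst y)" "z \<in> Obs" "E y (z, z, hi z)"
  shows "E (cmpT (x, y)) x"
proof -
  obtain a b f where x: "x = (a, b, f)" "a \<in> Obs" "b \<in> Obs" "f \<in> Hm a b" using A_cases[OF assms(1)] by blast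
  obtain c d g where y: "y = (c, d, g)" "c \<in> Obs" "d \<in> Obs" "g \<in> Hm c d" using A_cases[OF assms(2)] by blast
  have bc: "oe b c" using assms(3) x y by simp
  show ?thesis unfolding x(1) y(1) cmpT_simp
    by (rule E_A8[OF x(2,3) y(2,3) assms(4) bc x(4) y(4)]) (use assms(5) y in simp)
qed

lemma assocT: assumes "x \<in> A" "y \<in> A" "z \<in> A" "oe (fst (snd x)) (fst y)" "oe (fst (snd y)) (fst z)"
  shows "E (cmpT (x, cmpT (y, z))) (cmpT (cmpT (x, y), z))"
proof -
  obtain a b f where x: "x = (a, b, f)" "a \<in> Obs" "b \<in> Obs" "f \<in> Hm a b" using A_cases[OF assms(1)] by blast
  obtain c d g where y: "y = (c, d, g)" "c \<in> Obs" "d \<in> Obs" "g \<in> Hm c d" using A_cases[OF assms(2)] by blast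
  obtain e k h where z: "z = (e, k, h)" "e \<in> Obs" "k \<in> Obs" "h \<in> Hm e k" using A_cases[OF assms(3)] by blast
  have bc: "oe b c" "oe d e" using assms(4,5) x y z by simp_all
  show ?thesis unfolding x(1) y(1) z(1) cmpT_simp
    by (rule E_assoc[OF x(2,3) y(2,3) z(2,3) bc x(4) y(4) z(4)])
qed


lemma C2s_cases: assumes "u \<in> C2s"
  obtains F G where "u = (F, G)" "F \<in> A" "G \<in> A" "oe (fst (snd F)) (fst G)"
  using assms unfolding C2s_def by blast

lemma E2_simp: "E2 (F, G) (F', G') \<longleftrightarrow> E F F' \<and> E G G'" unfolding E2_def by simp

lemma rec_eq: "hf_to_ea H = \<lparr>C0 = Obs, eq0 = oe, C1 = A, eq1 = E, C2 = C2s, eq2 = E2,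
   ea_id = (\<lambda>a. (a, a, hi a)), ea_dom = fst, ea_cod = (\<lambda>x. fst (snd x)), ea_cmp = cmpT,
   ea_fst = fst, ea_snd = snd\<rparr>"
proof -
  have 1: "(\<lambda>(a, b, f). a) = fst" by (auto simp: fun_eq_iff)
  have 2: "(\<lambda>(a::'p, b::'p, f::'h). b) = (\<lambda>x. fst (snd x))" by (auto simp: fun_eq_iff)
  have 3: "(\<lambda>(F, G). F) = fst" by (auto simp: fun_eq_iff)
  have 4: "(\<lambda>(F, G). G) = snd" by (auto simp: fun_eq_iff)
  show ?thesis unfolding hf_to_ea_def Let_def A_def E_def C2s_def E2_def cmpT_def 1 3 4 by (simp add: fun_eq_iff)
qed

lemma A_ofC2: "u \<in> C2s \<Longrightarrow> fst u \<in> A \<and> snd u \<in> A \<and> oe (fst (snd (fst u))) (fst (snd u))"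
  by (erule C2s_cases) simp

theorem part2: "is_eacat (hf_to_ea H)"
  unfolding rec_eq is_eacat_def eacat.select_convs
proof (intro conjI)
  show "setoid Obs oe" by (rule P(1))
  show SA: "setoid A E" unfolding setoid_def using EA_refl EA_sym EA_trans by blast
  show "setoid C2s E2" unfolding setoid_def
  proof (intro conjI ballI impI)
    fix x assume "x \<in> C2s" then show "E2 x x" by (rule C2s_cases) (simp add: E2_simp EA_refl)
  next
    fix x y assume x: "x \<in> C2s" and y: "y \<in> C2s" and e: "E2 x y"
    obtain F G where xx: "x = (F, G)" "F \<in> A" "G \<in> A" using C2s_cases[OF x] by blast
    obtain F' G' where yy: "y = (F', G')" "F' \<in> A" "G' \<in> A" using C2s_cases[OF y] by blast
    show "E2 y x" using e unfolding xx(1) yy(1) E2_simp using EA_sym xx yy by blast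
  next
    fix x y z assume x: "x \<in> C2s" and y: "y \<in> C2s" and z: "z \<in> C2s" and e: "E2 x y" "E2 y z"
    obtain F G where xx: "x = (F, G)" "F \<in> A" "G \<in> A" using C2s_cases[OF x] by blast
    obtain F' G' where yy: "y = (F', G')" "F' \<in> A" "G' \<in> A" using C2s_cases[OF y] by blast
    obtain F'' G'' where zz: "z = (F'', G'')" "F'' \<in> A" "G'' \<in> A" using C2s_cases[OF z] by blast
    show "E2 x z" using e unfolding xx(1) yy(1) zz(1) E2_simp using EA_trans xx yy zz by blast
  qed
  show "ext_fun Obs oe A E (\<lambda>a. (a, a, hi a))" unfolding ext_fun_def using id_in E_id by simp
  show "ext_fun A E Obs oe fst" unfolding ext_fun_def using A_dom EA_dom by blast
  show "ext_fun A E Obs oe (\<lambda>x. fst (snd x))" unfolding ext_fun_def using A_cod EA_cod by blast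
  show "ext_fun C2s E2 A E cmpT" unfolding ext_fun_def
  proof (intro conjI ballI impI)
    fix x assume "x \<in> C2s" then show "cmpT x \<in> A" by (rule C2s_cases) (simp add: cmpT_in)
  next
    fix x y assume x: "x \<in> C2s" and y: "y \<in> C2s" and e: "E2 x y"
    obtain F G where xx: "x = (F, G)" "F \<in> A" "G \<in> A" "oe (fst (snd F)) (fst G)" using C2s_cases[OF x] by blast
    obtain F' G' where yy: "y = (F', G')" "F' \<in> A" "G' \<in> A" "oe (fst (snd F')) (fst G')" using C2s_cases[OF y] by blast
    show "E (cmpT x) (cmpT y)" using e unfolding xx(1) yy(1) E2_simp using cmpT_ext xx yy by blast
  qed
  show "ext_fun C2s E2 A E fst" unfolding ext_fun_def
    by (auto elim!: C2s_cases simp: E2_simp)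
  show "ext_fun C2s E2 A E snd" unfolding ext_fun_def
    by (auto elim!: C2s_cases simp: E2_simp)
  show "\<forall>x\<in>Obs. oe (fst (x, x, hi x)) x" using or by simp
  show "\<forall>x\<in>Obs. oe (fst (snd (x, x, hi x))) x" using or by simp
  show "\<forall>u\<in>C2s. oe (fst (cmpT u)) (fst (fst u))"
  proof
    fix u assume "u \<in> C2s"
    then obtain F G where u: "u = (F, G)" "F \<in> A" by (rule C2s_cases)
    show "oe (fst (cmpT u)) (fst (fst u))" unfolding u(1) cmpT_fst using or A_dom[OF u(2)] by simp
  qed
  show "\<forall>u\<in>C2s. oe (fst (snd (cmpT u))) (fst (snd (snd u)))"
  proof
    fix u assume "u \<in> C2s"
    then obtain F G where u: "u = (F, G)" "G \<in> A" by (rule C2s_cases)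
    show "oe (fst (snd (cmpT u))) (fst (snd (snd u)))" unfolding u(1) cmpT_cod using or A_cod[OF u(2)] by simp
  qed
  show "\<forall>u\<in>C2s. \<forall>v\<in>C2s. E (fst u) (fst v) \<longrightarrow> E (snd u) (snd v) \<longrightarrow> E2 u v"
    by (auto elim!: C2s_cases simp: E2_simp)
  show "\<forall>f\<in>A. \<forall>g\<in>A. oe (fst f) (fst (snd g)) \<longrightarrow> (\<exists>u\<in>C2s. E (snd u) f \<and> E (fst u) g)"
  proof (intro ballI impI)
    fix f g assume f: "f \<in> A" and g: "g \<in> A" and o: "oe (fst f) (fst (snd g))"
    have "(g, f) \<in> C2s" unfolding C2s_def using f g os[OF A_dom[OF f] A_cod[OF g] o] by simp
    then show "\<exists>u\<in>C2s. E (snd u) f \<and> E (fst u) g" using EA_refl[OF f] EA_refl[OF g] by (intro bexI[of _ "(g, f)"]) simp_all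
  qed
  show "\<forall>u\<in>C2s. \<forall>y\<in>Obs. E (fst u) (y, y, hi y) \<longrightarrow> E (cmpT u) (snd u)"
  proof (intro ballI impI)
    fix u y assume u: "u \<in> C2s" and y: "y \<in> Obs" and e: "E (fst u) (y, y, hi y)"
    obtain F G where uu: "u = (F, G)" "F \<in> A" "G \<in> A" "oe (fst (snd F)) (fst G)" using C2s_cases[OF u] by blast
    show "E (cmpT u) (snd u)" using A7T[OF uu(2-4) y] e unfolding uu(1) by simp
  qed
  show "\<forall>u\<in>C2s. \<forall>x\<in>Obs. E (snd u) (x, x, hi x) \<longrightarrow> E (cmpT u) (fst u)"
  proof (intro ballI impI)
    fix u y assume u: "u \<in> C2s" and y: "y \<in> Obs" and e: "E (snd u) (y, y, hi y)"
    obtain F G where uu: "u = (F, G)" "F \<in> A" "G \<in> A" "oe (fst (snd F)) (fst G)" using C2s_cases[OF u] by blast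
    show "E (cmpT u) (fst u)" using A8T[OF uu(2-4) y] e unfolding uu(1) by simp
  qed
  show "\<forall>w\<in>C2s. \<forall>v\<in>C2s. \<forall>u\<in>C2s. \<forall>z\<in>C2s.
         E (fst w) (fst v) \<longrightarrow> E (snd v) (fst u) \<longrightarrow> E (snd u) (snd z) \<longrightarrow>
         E (snd w) (cmpT u) \<longrightarrow> E (cmpT v) (fst z) \<longrightarrow> E (cmpT w) (cmpT z)"
  proof (intro ballI impI)
    fix w v u z assume w: "w \<in> C2s" and v: "v \<in> C2s" and u: "u \<in> C2s" and z: "z \<in> C2s"
      and e1: "E (fst w) (fst v)" and e2: "E (snd v) (fst u)" and e3: "E (snd u) (snd z)"
      and e4: "E (snd w) (cmpT u)" and e5: "E (cmpT v) (fst z)"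
    obtain W1 W2 where ww: "w = (W1, W2)" "W1 \<in> A" "W2 \<in> A" "oe (fst (snd W1)) (fst W2)" using C2s_cases[OF w] by blast
    obtain V1 V2 where vv: "v = (V1, V2)" "V1 \<in> A" "V2 \<in> A" "oe (fst (snd V1)) (fst V2)" using C2s_cases[OF v] by blast
    obtain U1 U2 where uu: "u = (U1, U2)" "U1 \<in> A" "U2 \<in> A" "oe (fst (snd U1)) (fst U2)" using C2s_cases[OF u] by blast
    obtain Z1 Z2 where zz: "z = (Z1, Z2)" "Z1 \<in> A" "Z2 \<in> A" "oe (fst (snd Z1)) (fst Z2)" using C2s_cases[OF z] by blast
    have e1': "E W1 V1" and e2': "E V2 U1" and e3': "E U2 Z2" and e4': "E W2 (cmpT (U1, U2))"
      and e5': "E (cmpT (V1, V2)) Z1" using e1 e2 e3 e4 e5 ww vv uu zz by simp_all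
    have U: "cmpT (U1, U2) \<in> A" by (rule cmpT_in[OF uu(2-4)])
    have V: "cmpT (V1, V2) \<in> A" by (rule cmpT_in[OF vv(2-4)])
    have d1: "oe (fst V2) (fst U1)" using EA_dom[OF e2'] .
    have c1: "oe (fst (snd V2)) (fst (snd U1))" using EA_cod[OF e2'] .
    have comp1: "oe (fst (snd V1)) (fst (cmpT (U1, U2)))" unfolding cmpT_fst
      by (rule ot[OF A_cod[OF vv(2)] A_dom[OF vv(3)] A_dom[OF uu(2)] vv(4) d1])
    have comp2: "oe (fst (snd V2)) (fst U2)"
      by (rule ot[OF A_cod[OF vv(3)] A_cod[OF uu(2)] A_dom[OF uu(3)] c1 uu(4)])
    have comp3: "oe (fst (snd (cmpT (V1, V2)))) (fst U2)" unfolding cmpT_cod by (rule comp2)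
    have VU: "cmpT (V2, U2) \<in> A" by (rule cmpT_in[OF vv(3) uu(3) comp2])
    have comp4: "oe (fst (snd V1)) (fst (cmpT (V2, U2)))" unfolding cmpT_fst by (rule vv(4))
    have s1: "E (cmpT (W1, W2)) (cmpT (V1, cmpT (U1, U2)))"
      by (rule cmpT_ext[OF ww(2,3) vv(2) U ww(4) comp1 e1' e4'])
    have s2: "E (cmpT (U1, U2)) (cmpT (V2, U2))"
      by (rule cmpT_ext[OF uu(2,3) vv(3) uu(3) uu(4) comp2 EA_sym[OF vv(3) uu(2) e2'] EA_refl[OF uu(3)]])
    have s3: "E (cmpT (V1, cmpT (U1, U2))) (cmpT (V1, cmpT (V2, U2)))"
      by (rule cmpT_ext[OF vv(2) U vv(2) VU comp1 comp4 EA_refl[OF vv(2)] s2])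
    have s4: "E (cmpT (V1, cmpT (V2, U2))) (cmpT (cmpT (V1, V2), U2))"
      by (rule assocT[OF vv(2,3) uu(3) vv(4) comp2])
    have s5: "E (cmpT (cmpT (V1, V2), U2)) (cmpT (Z1, Z2))"
      by (rule cmpT_ext[OF V uu(3) zz(2,3) comp3 zz(4) e5' e3'])
    have A1: "cmpT (W1, W2) \<in> A" by (rule cmpT_in[OF ww(2-4)])
    have A2: "cmpT (V1, cmpT (U1, U2)) \<in> A" by (rule cmpT_in[OF vv(2) U comp1])
    have A3: "cmpT (V1, cmpT (V2, U2)) \<in> A" by (rule cmpT_in[OF vv(2) VU comp4])
    have A4: "cmpT (cmpT (V1, V2), U2) \<in> A" by (rule cmpT_in[OF V uu(3) comp3])
    have A5: "cmpT (Z1, Z2) \<in> A" by (rule cmpT_in[OF zz(2-4)])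
    have "E (cmpT (W1, W2)) (cmpT (Z1, Z2))"
      by (rule EA_trans[OF A1 A2 A5 s1 EA_trans[OF A2 A3 A5 s3 EA_trans[OF A3 A4 A5 s4 s5]]])
    then show "E (cmpT w) (cmpT z)" unfolding ww(1) zz(1) .
  qed
qed

end

theorem mainTheorem8:
  fixes C :: "('o, 'm, 'c) eacat"
    and H :: "('p, 'h) hfcat"
  shows "(is_eacat C \<longrightarrow> is_hfcat (ea_to_hf C)) \<and>
         (is_hfcat H \<longrightarrow> is_eacat (hf_to_ea H))"
proof (intro conjI impI)
  assume "is_eacat C"
  then show "is_hfcat (ea_to_hf C)" by (rule eac.part1[OF eac.intro])
next
  assume "is_hfcat H"
  then show "is_eacat (hf_to_ea H)" by (rule hfc.part2[OF hfc.intro])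
qed

end
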